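(* Let $\mathcal I,\mathcal J$ be ideals on $\omega$ with $\mathcal I\subseteq\mathcal J$. For every cardinal $\kappa$ there exists a Hausdorff compact (hence normal) space $X$ with $|X|=\kappa$ such that for every sequence $(f_n)$ in $\mathcal C(X)$, if $(f_n)$ is $\mathcal I$-pointwise convergent to $0$ then $(f_n)$ is $\mathcal J$-$\sigma$-uniformly convergent to $0$.
   Context: An ideal on $\omega$ is a family $\mathcal I\subseteq\mathcal P(\omega)$ closed under finite unions and subsets, containing all finite sets, with $\omega\notin\mathcal I$. A real sequence $(a_n)$ is $\mathcal I$-convergent to $0$ if $\{n:|a_n|\ge\varepsilon\}\in\mathcal I$ for all $\varepsilon>0$. For a sequence $(f_n)$ of real functions on a set $X$: $\mathcal I$-pointwise convergence to $0$ means $(f_n(x))$ is $\mathcal I$-convergent to $0$ for each $x$; $\mathcal J$-uniform means $\{n:\exists x\in X\,(|f_n(x)|\ge\varepsilon)\}\in\mathcal J$ for each $\varepsilon>0$; $\mathcal J$-$\sigma$-uniform means $X=\bigcup_{k\in\omega}X_k$ with $(f_n\restriction X_k)$ $\mathcal J$-uniformly convergent to $0$ for each $k$. $\mathcal C(X)$ = continuous real functions on $X$. *)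

theory Defs
  imports "HOL-Analysis.Analysis" "HOL-Library.Equipollence"
begin

definition is_ideal :: "nat set set \<Rightarrow> bool" where
  "is_ideal I \<longleftrightarrow>
     (\<forall>A\<in>I. \<forall>B\<in>I. A \<union> B \<in> I) \<and>
     (\<forall>A\<in>I. \<forall>B. B \<subseteq> A \<longrightarrow> B \<in> I) \<and>
     (\<forall>A. finite A \<longrightarrow> A \<in> I) \<and>
     (UNIV :: nat set) \<notin> I"

definition ideal_conv_zero :: "nat set set \<Rightarrow> (nat \<Rightarrow> real) \<Rightarrow> bool" where
  "ideal_conv_zero I a \<longleftrightarrow> (\<forall>\<epsilon>>0. {n. \<bar>a n\<bar> \<ge> \<epsilon>} \<in> I)"

definition ideal_pointwise_zero :: "nat set set \<Rightarrow> 'a set \<Rightarrow> (nat \<Rightarrow> 'a \<Rightarrow> real) \<Rightarrow> bool" where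
  "ideal_pointwise_zero I S f \<longleftrightarrow> (\<forall>x\<in>S. ideal_conv_zero I (\<lambda>n. f n x))"

definition ideal_uniform_zero :: "nat set set \<Rightarrow> 'a set \<Rightarrow> (nat \<Rightarrow> 'a \<Rightarrow> real) \<Rightarrow> bool" where
  "ideal_uniform_zero J S f \<longleftrightarrow> (\<forall>\<epsilon>>0. {n. \<exists>x\<in>S. \<bar>f n x\<bar> \<ge> \<epsilon>} \<in> J)"

definition ideal_sigma_uniform_zero :: "nat set set \<Rightarrow> 'a set \<Rightarrow> (nat \<Rightarrow> 'a \<Rightarrow> real) \<Rightarrow> bool" where
  "ideal_sigma_uniform_zero J S f \<longleftrightarrow>
     (\<exists>Xk :: nat \<Rightarrow> 'a set. S = (\<Union>k. Xk k) \<and> (\<forall>k. ideal_uniform_zero J (Xk k) f))"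

end

theory Submission
  imports Defs
begin

definition opc :: "'a set \<Rightarrow> 'a \<Rightarrow> 'a set \<Rightarrow> bool" where
  "opc K p U \<longleftrightarrow> U \<subseteq> K \<and> (p \<in> U \<longrightarrow> finite (K - U))"

lemma opc_istop: "istopology (opc K p)"
  unfolding istopology_def
proof (intro conjI allI impI)
  fix S T assume "opc K p S" "opc K p T"
  then show "opc K p (S \<inter> T)" by (auto simp: opc_def Diff_Int)
next
  fix KK assume h0: "\<forall>S\<in>KK. opc K p S"
  then have h: "\<forall>S\<in>KK. S \<subseteq> K \<and> (p \<in> S \<longrightarrow> finite (K - S))" by (simp add: opc_def)
  show "opc K p (\<Union> KK)" unfolding opc_def
  proof (intro conjI impI)
    show "\<Union> KK \<subseteq> K" using h by auto
  next
    assume "p \<in> \<Union> KK"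
    then obtain S where "S \<in> KK" "p \<in> S" by auto
    with h have "finite (K - S)" by auto
    moreover have "K - \<Union> KK \<subseteq> K - S" using \<open>S \<in> KK\<close> by auto
    ultimately show "finite (K - \<Union> KK)" by (rule finite_subset[rotated])
  qed
qed

lemma opc_open: "openin (topology (opc K p)) = opc K p"
  by (rule topology_inverse'[OF opc_istop])

lemma opc_topspace: "topspace (topology (opc K p)) = K"
proof -
  have "opc K p K" by (simp add: opc_def)
  moreover have "\<And>U. opc K p U \<Longrightarrow> U \<subseteq> K" by (simp add: opc_def)
  ultimately show ?thesis unfolding topspace_def opc_open by auto
qed

lemma opc_hausdorff: "Hausdorff_space (topology (opc K p))"
  unfolding Hausdorff_space_def opc_topspace opc_open
proof (intro allI impI)
  fix x y assume h: "x \<in> K \<and> y \<in> K \<and> x \<noteq> y"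
  show "\<exists>U V. opc K p U \<and> opc K p V \<and> x \<in> U \<and> y \<in> V \<and> disjnt U V"
  proof (cases "x = p")
    case True
    then show ?thesis using h
      by (rule_tac x="K - {y}" in exI, rule_tac x="{y}" in exI) (auto simp: opc_def disjnt_def Diff_Diff_Int)
  next
    case False
    show ?thesis
    proof (cases "y = p")
      case True
      then show ?thesis using h
        by (rule_tac x="{x}" in exI, rule_tac x="K - {x}" in exI) (auto simp: opc_def disjnt_def Diff_Diff_Int)
    next
      case False
      then show ?thesis using h \<open>x \<noteq> p\<close>
        by (rule_tac x="{x}" in exI, rule_tac x="{y}" in exI) (auto simp: opc_def disjnt_def Diff_Diff_Int)
    qed
  qed
qed

lemma opc_compact:
  assumes "K \<noteq> {} \<Longrightarrow> p \<in> K"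
  shows "compact_space (topology (opc K p))"
  unfolding compact_space_alt opc_topspace opc_open
proof (intro allI impI)
  fix UU assume h: "(\<forall>U\<in>UU. opc K p U) \<and> K \<subseteq> \<Union> UU"
  show "\<exists>F. finite F \<and> F \<subseteq> UU \<and> K \<subseteq> \<Union> F"
  proof (cases "K = {}")
    case True then show ?thesis by auto
  next
    case False
    with assms have "p \<in> K" by auto
    with h obtain U0 where U0: "U0 \<in> UU" "p \<in> U0" by auto
    with h have fin: "finite (K - U0)" by (auto simp: opc_def)
    have "\<forall>x \<in> K - U0. \<exists>U. U \<in> UU \<and> x \<in> U" using h by auto
    then obtain g where g: "\<And>x. x \<in> K - U0 \<Longrightarrow> g x \<in> UU \<and> x \<in> g x" by metis
    show ?thesis
      apply (rule exI[of _ "insert U0 (g ` (K - U0))"])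
      using fin g U0 by auto
  qed
qed

lemma finite_far:
  assumes c: "continuous_map (topology (opc K p)) euclideanreal g" and e: "e > 0" and p: "p \<in> K"
  shows "finite {x \<in> K. \<bar>g x - g p\<bar> \<ge> e}"
proof -
  have "openin (topology (opc K p)) {x \<in> K. g x \<in> ball (g p) e}"
    using openin_continuous_map_preimage[OF c, of "ball (g p) e"] opc_topspace[of K p] by simp
  hence "opc K p {x \<in> K. g x \<in> ball (g p) e}" by (simp add: opc_open)
  moreover have "p \<in> {x \<in> K. g x \<in> ball (g p) e}" using p e by simp
  ultimately have "finite (K - {x \<in> K. g x \<in> ball (g p) e})" by (simp add: opc_def)
  moreover have "{x \<in> K. \<bar>g x - g p\<bar> \<ge> e} \<subseteq> K - {x \<in> K. g x \<in> ball (g p) e}"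
    by (auto simp: dist_real_def)
  ultimately show ?thesis by (rule finite_subset[rotated])
qed

lemma countable_neq:
  assumes c: "continuous_map (topology (opc K p)) euclideanreal g" and p: "p \<in> K"
  shows "countable {x \<in> K. g x \<noteq> g p}"
proof -
  have "{x \<in> K. g x \<noteq> g p} = (\<Union>m::nat. {x \<in> K. \<bar>g x - g p\<bar> \<ge> 1 / (real m + 1)})"
  proof (rule set_eqI, rule iffI)
    fix x assume "x \<in> {x \<in> K. g x \<noteq> g p}"
    then have x: "x \<in> K" "\<bar>g x - g p\<bar> > 0" by auto
    then obtain m :: nat where "1 / (real m + 1) < \<bar>g x - g p\<bar>"
      using reals_Archimedean[OF x(2)] by (metis of_nat_Suc inverse_eq_divide add.commute)
    then show "x \<in> (\<Union>m::nat. {x \<in> K. \<bar>g x - g p\<bar> \<ge> 1 / (real m + 1)})"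
      using x by (intro UN_I[of m]) auto
  next
    fix x assume "x \<in> (\<Union>m::nat. {x \<in> K. \<bar>g x - g p\<bar> \<ge> 1 / (real m + 1)})"
    then obtain m :: nat where "x \<in> K" "\<bar>g x - g p\<bar> \<ge> 1 / (real m + 1)" by auto
    moreover have "1 / (real m + 1) > 0" by simp
    ultimately show "x \<in> {x \<in> K. g x \<noteq> g p}" by auto
  qed
  moreover have "\<And>m::nat. finite {x \<in> K. \<bar>g x - g p\<bar> \<ge> 1 / (real m + 1)}"
    by (rule finite_far[OF c _ p]) simp
  ultimately show ?thesis by (simp add: countable_finite)
qed

theorem theorem6p3:
  fixes I J :: "nat set set" and K :: "'a set"
  assumes "is_ideal I" and "is_ideal J" and "I \<subseteq> J"
  shows "\<exists>X :: 'a topology.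
           compact_space X \<and> Hausdorff_space X \<and> topspace X \<approx> K \<and>
           (\<forall>f :: nat \<Rightarrow> 'a \<Rightarrow> real.
              (\<forall>n. continuous_map X euclideanreal (f n)) \<longrightarrow>
              ideal_pointwise_zero I (topspace X) f \<longrightarrow>
              ideal_sigma_uniform_zero J (topspace X) f)"
proof -
  define p where "p = (SOME p. p \<in> K)"
  have pK: "K \<noteq> {} \<Longrightarrow> p \<in> K" unfolding p_def by (simp add: some_in_eq)
  have Jsub: "\<And>A B. A \<in> J \<Longrightarrow> B \<subseteq> A \<Longrightarrow> B \<in> J" using assms(2) by (auto simp: is_ideal_def)
  have Jfin: "\<And>A. finite A \<Longrightarrow> A \<in> J" using assms(2) by (auto simp: is_ideal_def)
  let ?X = "topology (opc K p)"
  show ?thesis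
  proof (intro exI conjI allI impI)
    show "compact_space ?X" by (rule opc_compact[OF pK])
    show "Hausdorff_space ?X" by (rule opc_hausdorff)
    show "topspace ?X \<approx> K" by (simp add: opc_topspace)
  next
    fix f :: "nat \<Rightarrow> 'a \<Rightarrow> real"
    assume cont: "\<forall>n. continuous_map ?X euclideanreal (f n)"
      and pw: "ideal_pointwise_zero I (topspace ?X) f"
    have pt: "\<And>x e. x \<in> K \<Longrightarrow> e > 0 \<Longrightarrow> {n. \<bar>f n x\<bar> \<ge> e} \<in> J"
      using pw assms(3) by (auto simp: ideal_pointwise_zero_def ideal_conv_zero_def opc_topspace)
    show "ideal_sigma_uniform_zero J (topspace ?X) f"
    proof (cases "K = {}")
      case True
      show ?thesis unfolding ideal_sigma_uniform_zero_def ideal_uniform_zero_def opc_topspace True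
        by (rule exI[of _ "\<lambda>_. {}"]) (simp add: Jfin)
    next
      case False
      hence p: "p \<in> K" using pK by auto
      define C where "C = (\<Union>n. {x \<in> K. f n x \<noteq> f n p})"
      have cC: "countable C" unfolding C_def
        using countable_neq[OF cont[rule_format] p] by auto
      have CK: "C \<subseteq> K" unfolding C_def by auto
      define Xk where "Xk = (\<lambda>k::nat. if k = 0 then K - C else
                         if C = {} then {} else {from_nat_into C (k - 1)})"
      have cov: "K = (\<Union>k. Xk k)"
      proof (rule set_eqI, rule iffI)
        fix x assume x: "x \<in> K"
        show "x \<in> (\<Union>k. Xk k)"
        proof (cases "x \<in> C")
          case True
          then obtain i where "from_nat_into C i = x"
            using from_nat_into_surj[OF cC True] by auto
          then have "x \<in> Xk (Suc i)" using True by (auto simp: Xk_def)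
          then show ?thesis by auto
        next
          case False
          then have "x \<in> Xk 0" using x by (simp add: Xk_def)
          then show ?thesis by auto
        qed
      next
        fix x assume "x \<in> (\<Union>k. Xk k)"
        then obtain k where "x \<in> Xk k" by auto
        then show "x \<in> K" using CK from_nat_into[of C] by (auto simp: Xk_def split: if_splits)
      qed
      have unif: "ideal_uniform_zero J (Xk k) f" for k
        unfolding ideal_uniform_zero_def
      proof (intro allI impI)
        fix e :: real assume e: "e > 0"
        show "{n. \<exists>x\<in>Xk k. e \<le> \<bar>f n x\<bar>} \<in> J"
        proof (cases "k = 0")
          case True
          have "{n. \<exists>x\<in>Xk k. e \<le> \<bar>f n x\<bar>} \<subseteq> {n. \<bar>f n p\<bar> \<ge> e}"
            using True by (auto simp: Xk_def C_def)
          then show ?thesis using Jsub pt[OF p e] by blast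
        next
          case False
          show ?thesis
          proof (cases "C = {}")
            case True
            then show ?thesis using False by (simp add: Xk_def Jfin)
          next
            case Cne: False
            let ?y = "from_nat_into C (k - 1)"
            have "?y \<in> K" using from_nat_into[OF Cne] CK by auto
            moreover have "{n. \<exists>x\<in>Xk k. e \<le> \<bar>f n x\<bar>} = {n. \<bar>f n ?y\<bar> \<ge> e}"
              using False Cne by (simp add: Xk_def)
            ultimately show ?thesis using pt e by simp
          qed
        qed
      qed
      show ?thesis unfolding ideal_sigma_uniform_zero_def opc_topspace
        using cov unif by blast
    qed
  qed
qed

end
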